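(* Let $\phi\in\,]0,\pi[$, $M\in\mathbb{R}$, $N>0$, and let $\Sigma$ be the Keplerian branch around ${\rm O}$ in the plane ${\rm O}xy$ with equation $r=My+N$. The affine map $(x_1,y_1)\mapsto(x_3,y_3)$ defined by $x_1=x_3-M\frac{\cos\phi}{\sin\phi}y_3-N\cos\phi$, $y_1=\frac{1}{\sin\phi}y_3$ sends any horizontal chord ${\rm A}{\rm B}$ of $\Sigma$ (two distinct points of $\Sigma$ with the same ordinate) onto a horizontal chord ${\rm A}'{\rm B}'$ of the image branch with $\|{\rm A}'{\rm B}'\|=\|{\rm A}{\rm B}\|$ and $\|{\rm O}{\rm A}'\|+\|{\rm O}{\rm B}'\|=\|{\rm O}{\rm A}\|+\|{\rm O}{\rm B}\|$.
   Context: In the Euclidean plane ${\rm O}xy$, $r=\sqrt{x^2+y^2}$. A Keplerian branch around ${\rm O}$ is the image of a solution of Newton's system $\ddot q=-q/\|q\|^3$ (extended through collisions by bouncing back along the same ray). For $\gamma>0$, the set of points satisfying $r=\alpha x+\beta y+\gamma$ is a Keplerian branch around ${\rm O}$; the image of $\Sigma$ by the given map is the Keplerian branch $r=x\cos\phi+yM\sin\phi+N\sin^2\phi$. *)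

theory Defs
  imports "HOL-Analysis.Analysis"
begin

text \<open>Points of the plane Oxy are pairs (x,y); the norm on real \<times> real is the
Euclidean one, so norm p = r = sqrt(x^2+y^2) and dist is Euclidean distance.\<close>
definition kepler_branch :: "real \<Rightarrow> real \<Rightarrow> real \<Rightarrow> (real \<times> real) set" where
  "kepler_branch \<alpha> \<beta> \<gamma> = {p. norm p = \<alpha> * fst p + \<beta> * snd p + \<gamma>}"

definition affine_rel :: "real \<Rightarrow> real \<Rightarrow> real \<Rightarrow> real \<times> real \<Rightarrow> real \<times> real \<Rightarrow> bool" where
  "affine_rel \<phi> M N P Q \<longleftrightarrow>
     fst P = fst Q - M * (cos \<phi> / sin \<phi>) * snd Q - N * cos \<phi> \<and>
     snd P = snd Q / sin \<phi>"

end

theory Submission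
  imports Defs
begin

lemma norm_pair2: "norm (p::real\<times>real) = sqrt ((fst p)\<^sup>2 + (snd p)\<^sup>2)"
  by (cases p) (simp add: norm_Pair)

lemma img:
  fixes \<phi> M N x y :: real
  assumes s: "sin \<phi> > 0" and R: "sqrt (x\<^sup>2 + y\<^sup>2) = M * y + N"
  shows "sqrt ((x + M * cos \<phi>*y + N * cos \<phi>)\<^sup>2 + (y * sin \<phi>)\<^sup>2) = cos \<phi> * x + (M * y+N)"
proof -
  define r where "r = M * y+N"
  have r2: "x\<^sup>2 + y\<^sup>2 = r\<^sup>2" using R r_def by (metis real_sqrt_ge_0_iff real_sqrt_pow2 power2_eq_square sum_power2_ge_zero)
  have cs: "(sin \<phi>)\<^sup>2 = 1 - (cos \<phi>)\<^sup>2" by (simp add: sin_squared_eq)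
  have "\<bar>x\<bar> \<le> r" using R r_def by (metis real_sqrt_abs real_sqrt_le_mono le_add_same_cancel1 zero_le_power2)
  moreover have "\<bar>cos \<phi>\<bar> \<le> 1" by simp
  ultimately have "\<bar>cos \<phi> * x\<bar> \<le> r"
    by (metis abs_mult abs_ge_zero mult_left_le_one_le order_trans)
  hence pos: "cos \<phi> * x + r \<ge> 0" by linarith
  have "(x + M * cos \<phi>*y + N * cos \<phi>)\<^sup>2 + (y * sin \<phi>)\<^sup>2 = (cos \<phi> * x + r)\<^sup>2"
  proof -
    have "(x + M * cos \<phi>*y + N * cos \<phi>)\<^sup>2 + (y * sin \<phi>)\<^sup>2 = (x + cos \<phi> * r)\<^sup>2 + y\<^sup>2 * (1 - (cos \<phi>)\<^sup>2)"
      by (simp add: r_def power_mult_distrib cs algebra_simps)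
    also have "\<dots> = (cos \<phi> * x + r)\<^sup>2 + ((cos \<phi>)\<^sup>2 - 1) * (r\<^sup>2 - x\<^sup>2 - y\<^sup>2)"
      by (simp add: power2_eq_square algebra_simps)
    also have "r\<^sup>2 - x\<^sup>2 - y\<^sup>2 = 0" using r2 by simp
    finally show ?thesis by simp
  qed
  then show ?thesis using pos r_def by simp
qed

theorem lemma8:
  fixes \<phi> M N :: real and A B A' B' :: "real \<times> real"
  assumes "0 < \<phi>" "\<phi> < pi" "0 < N"
    and "A \<in> kepler_branch 0 M N" "B \<in> kepler_branch 0 M N"
    and "A \<noteq> B" "snd A = snd B"
    and "affine_rel \<phi> M N A A'" "affine_rel \<phi> M N B B'"
  shows "A' \<in> kepler_branch (cos \<phi>) (M * sin \<phi>) (N * (sin \<phi>)\<^sup>2)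
       \<and> B' \<in> kepler_branch (cos \<phi>) (M * sin \<phi>) (N * (sin \<phi>)\<^sup>2)
       \<and> A' \<noteq> B' \<and> snd A' = snd B'
       \<and> dist A' B' = dist A B
       \<and> norm A' + norm B' = norm A + norm B"
proof -
  have s: "sin \<phi> > 0" using assms sin_gt_zero by blast
  obtain a y where A: "A = (a,y)" by (cases A)
  obtain b where B: "B = (b,y)" using assms(7) A by (cases B) auto
  have RA: "sqrt (a\<^sup>2 + y\<^sup>2) = M * y + N" using assms(4) A by (simp add: kepler_branch_def norm_Pair)
  have RB: "sqrt (b\<^sup>2 + y\<^sup>2) = M * y + N" using assms(5) B by (simp add: kepler_branch_def norm_Pair)
  have ab: "a \<noteq> b" using assms(6) A B by simp
  have "a\<^sup>2 = b\<^sup>2" using RA RB by (metis add_right_cancel real_sqrt_eq_iff)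
  hence bma: "b = - a" using ab by (metis power2_eq_iff)
  have A': "A' = (a + M * cos \<phi>*y + N * cos \<phi>, y * sin \<phi>)"
  proof -
    have "snd A' = y * sin \<phi>" using assms(8) A s by (auto simp: affine_rel_def field_simps)
    moreover have "fst A' = a + M * cos \<phi> * y + N * cos \<phi>" using assms(8) A s calculation by (auto simp: affine_rel_def)
    ultimately show ?thesis by (metis prod.collapse)
  qed
  have B': "B' = (b + M * cos \<phi>*y + N * cos \<phi>, y * sin \<phi>)"
  proof -
    have "snd B' = y * sin \<phi>" using assms(9) B s by (auto simp: affine_rel_def field_simps)
    moreover have "fst B' = b + M * cos \<phi> * y + N * cos \<phi>" using assms(9) B s calculation by (auto simp: affine_rel_def)
    ultimately show ?thesis by (metis prod.collapse)
  qed
  have nA: "norm A' = cos \<phi> * a + (M * y+N)" using img[OF s RA] A' by (simp add: norm_Pair)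
  have nB: "norm B' = cos \<phi> * b + (M * y+N)" using img[OF s RB] B' by (simp add: norm_Pair)
  have cs: "(sin \<phi>)\<^sup>2 = 1 - (cos \<phi>)\<^sup>2" by (simp add: sin_squared_eq)
  have k: "cos \<phi> * a + (M * y+N) = cos \<phi> * (a + M * cos \<phi>*y + N * cos \<phi>) + M * sin \<phi> * (y * sin \<phi>) + N * (sin \<phi>)\<^sup>2" for a
  proof -
    have "M*y+N = (M*y+N) * (cos \<phi> * cos \<phi> + sin \<phi> * sin \<phi>)" by (simp add: sin_cos_squared_add3)
    then show ?thesis unfolding power2_eq_square by algebra
  qed
  have m1: "A' \<in> kepler_branch (cos \<phi>) (M * sin \<phi>) (N * (sin \<phi>)\<^sup>2)"
    using nA A' k[of a] by (simp add: kepler_branch_def)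
  have m2: "B' \<in> kepler_branch (cos \<phi>) (M * sin \<phi>) (N * (sin \<phi>)\<^sup>2)"
    using nB B' k[of b] by (simp add: kepler_branch_def)
  have m3: "A' \<noteq> B' \<and> snd A' = snd B'" using A' B' ab by simp
  have m4: "dist A' B' = dist A B" using A' B' A B by (simp add: dist_Pair_Pair dist_real_def)
  have nA0: "norm A = M*y+N" using RA A by (simp add: norm_Pair)
  have nB0: "norm B = M*y+N" using RB B by (simp add: norm_Pair)
  have m5: "norm A' + norm B' = norm A + norm B" using nA nB nA0 nB0 bma by simp
  show ?thesis using m1 m2 m3 m4 m5 by blast
qed

end
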